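(* Let $K$ be a field, $A=K(x)[[y]]$ the algebra of formal power series in $y$ with coefficients in $K(x)$, and let $p,q$ be mutually prime positive integers. Suppose $P,Q\in A$ satisfy $P^p=Q^q$. For $n\geq0$ let $P_n,Q_n$ be the truncations of $P,Q$ to degree $n$ in $y$, and let $\omega=pQ_n\,dP_n-qP_n\,dQ_n$. Then $\omega$ is divisible by $y^n$, and the reduced rational differential one-form $\omega_{red}=\omega/y^n$ is of degree $n$ with respect to $y$ and vanishes along the line $\{y=0\}$.
   Context: For $P=\sum_{i\geq0}a_i(x)y^i\in A$, its truncation is $P_n=\sum_{i=0}^n a_i(x)y^i\in K(x)[y]$. For a rational one-form $\omega=\alpha\,dx+\beta\,dy$ with $\alpha,\beta\in K(x)[y]$, its degree with respect to $y$ is $\deg_y\omega=\max\{\deg_y\alpha,\deg_y\beta+1\}$. Divisibility by $y^n$ means both $\alpha$ and $\beta$ are divisible by $y^n$ in $K(x)[y]$; vanishing along $\{y=0\}$ means the pullback of the form to the line $y=0$ is zero. *)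

theory Defs
  imports "HOL-Computational_Algebra.Computational_Algebra"
          "HOL-Computational_Algebra.Polynomial_FPS"
begin

text \<open>The rational function field K(x) is modelled as the fraction field
  of K[x], i.e. the type 'a poly fract.  The derivation d/dx on K(x) is the
  quotient rule applied to any representative a/b of a fraction
  (the result is independent of the representative).\<close>

definition ratfun_deriv :: "'a::field poly fract \<Rightarrow> 'a poly fract" where
  "ratfun_deriv f = (SOME g. \<exists>a b. b \<noteq> 0 \<and> f = Fract a b \<and>
      g = Fract (pderiv a * b - a * pderiv b) (b ^ 2))"

text \<open>A rational one-form alpha dx + beta dy with alpha, beta in K(x)[y] is
  represented by the pair (alpha, beta).  The differential of F in K(x)[y]:
  dF = (dF/dx) dx + (dF/dy) dy.\<close>

definition dx_part :: "'a::field poly fract poly \<Rightarrow> 'a poly fract poly" where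
  "dx_part F = map_poly ratfun_deriv F"

definition dy_part :: "'a::field poly fract poly \<Rightarrow> 'a poly fract poly" where
  "dy_part F = pderiv F"

text \<open>Degree in y of the one-form alpha dx + beta dy:
  max(deg alpha, deg beta + 1), with the zero polynomial having degree -infinity
  (encoded as -1 here; the zero form thus gets degree -1).\<close>

definition deg_y_form :: "'b::zero poly \<Rightarrow> 'b poly \<Rightarrow> int" where
  "deg_y_form \<alpha> \<beta> = max (if \<alpha> = 0 then -1 else int (degree \<alpha>))
                            (if \<beta> = 0 then -1 else int (degree \<beta>) + 1)"

text \<open>The form alpha dx + beta dy vanishes along {y = 0}: its pullback to the
  line y = 0 is alpha(x,0) dx, so the condition is alpha(x,0) = 0.\<close>

definition vanishes_on_y0 :: "'b::comm_semiring_0 poly \<Rightarrow> 'b poly \<Rightarrow> bool" where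
  "vanishes_on_y0 \<alpha> \<beta> \<longleftrightarrow> poly \<alpha> 0 = 0"

definition trunc_y :: "nat \<Rightarrow> 'b::zero fps \<Rightarrow> 'b poly" where
  "trunc_y n F = truncate_fps (Suc n) F"

end

theory Submission
  imports Defs
begin


lemma rd_Fract:
  fixes a b :: "'a::field poly"
  assumes "b \<noteq> 0"
  shows "ratfun_deriv (Fract a b) = Fract (pderiv a * b - a * pderiv b) (b ^ 2)"
  unfolding ratfun_deriv_def
proof (rule someI2_ex)
  show "\<exists>g a' b'. b' \<noteq> 0 \<and> Fract a b = Fract a' b' \<and> g = Fract (pderiv a' * b' - a' * pderiv b') (b'^2)"
    using assms by blast
next
  fix g assume "\<exists>a' b'. b' \<noteq> 0 \<and> Fract a b = Fract a' b' \<and> g = Fract (pderiv a' * b' - a' * pderiv b') (b'^2)"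
  then obtain a' b' where b': "b' \<noteq> 0" and e: "Fract a b = Fract a' b'"
    and g: "g = Fract (pderiv a' * b' - a' * pderiv b') (b'^2)" by blast
  have h: "a * b' = a' * b" using e assms b' by (simp add: eq_fract)
  have h2: "pderiv a * b' + a * pderiv b' = pderiv a' * b + a' * pderiv b"
    using arg_cong[OF h, of pderiv] by (simp add: pderiv_mult algebra_simps)
  have "(pderiv a' * b' - a' * pderiv b') * b^2 = (pderiv a * b - a * pderiv b) * b'^2"
    using h h2 by algebra
  then show "g = Fract (pderiv a * b - a * pderiv b) (b ^ 2)"
    using g assms b' by (simp add: eq_fract)
qed

lemma rd_add: "ratfun_deriv (x + y) = ratfun_deriv x + ratfun_deriv (y :: 'a::field poly fract)"
proof (cases x)
  case (Fract a b)
  show ?thesis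
  proof (cases y)
    case (Fract c d)
    have "(pderiv (a * d + c * b) * (b * d) - (a * d + c * b) * pderiv (b * d)) * (b\<^sup>2 * d\<^sup>2) =
      ((pderiv a * b - a * pderiv b) * d\<^sup>2 + (pderiv c * d - c * pderiv d) * b\<^sup>2) * (b * d)\<^sup>2"
      by (simp add: pderiv_mult pderiv_add algebra_simps power2_eq_square)
    then show ?thesis using \<open>x = _\<close> \<open>b \<noteq> 0\<close> Fract
      by (simp add: rd_Fract eq_fract)
  qed
qed

lemma rd_mult: "ratfun_deriv (x * y) = ratfun_deriv x * y + x * ratfun_deriv (y :: 'a::field poly fract)"
proof (cases x)
  case (Fract a b)
  show ?thesis
  proof (cases y)
    case (Fract c d)
    have "(pderiv (a * c) * (b * d) - a * c * pderiv (b * d)) * (b\<^sup>2 * d * (b * d\<^sup>2)) =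
      ((pderiv a * b - a * pderiv b) * c * (b * d\<^sup>2) + a * (pderiv c * d - c * pderiv d) * (b\<^sup>2 * d)) * (b * d)\<^sup>2"
      by (simp add: pderiv_mult algebra_simps power2_eq_square)
    then show ?thesis using \<open>x = _\<close> \<open>b \<noteq> 0\<close> Fract
      by (simp add: rd_Fract eq_fract)
  qed
qed

lemma rd_0: "ratfun_deriv (0 :: 'a::field poly fract) = 0"
  using rd_Fract[of 1 0] by (simp add: Zero_fract_def)

lemma rd_uminus: "ratfun_deriv (- x :: 'a::field poly fract) = - ratfun_deriv x"
  using rd_add[of x "-x"] by (simp add: rd_0 eq_neg_iff_add_eq_0 add.commute)

lemma rd_diff: "ratfun_deriv (x - y :: 'a::field poly fract) = ratfun_deriv x - ratfun_deriv y"
  using rd_add[of x "-y"] by (simp add: rd_uminus)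

lemma rd_sum: "ratfun_deriv (sum f A :: 'a::field poly fract) = (\<Sum>i\<in>A. ratfun_deriv (f i))"
  by (induction A rule: infinite_finite_induct) (auto simp: rd_0 rd_add)



definition Dxf :: "'a::field poly fract fps \<Rightarrow> 'a poly fract fps" where
  "Dxf F = Abs_fps (\<lambda>i. ratfun_deriv (F $ i))"

lemma Dxf_nth [simp]: "Dxf F $ i = ratfun_deriv (F $ i)"
  by (simp add: Dxf_def)

lemma Dxf_mult: "Dxf (F * G) = Dxf F * G + F * Dxf G"
  by (rule fps_ext) (simp add: fps_mult_nth rd_sum rd_mult sum.distrib)

lemma Dxf_power: "Dxf (F ^ Suc m) = of_nat (Suc m) * F ^ m * Dxf F"
  by (induction m) (simp_all add: Dxf_mult algebra_simps)

lemma key_identity: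
  fixes P Q DP DQ :: "'b::field fps"
  assumes "P ^ Suc p' = Q ^ Suc q'"
    and "D (P ^ Suc p') = of_nat (Suc p') * P ^ p' * DP"
    and "D (Q ^ Suc q') = of_nat (Suc q') * Q ^ q' * DQ"
  shows "of_nat (Suc p') * Q * DP - of_nat (Suc q') * P * DQ = 0"
proof -
  have e: "of_nat (Suc p') * P ^ p' * DP = of_nat (Suc q') * Q ^ q' * DQ"
    using assms by metis
  have "P ^ Suc p' * (of_nat (Suc p') * Q * DP - of_nat (Suc q') * P * DQ)
     = (of_nat (Suc p') * P ^ p' * DP) * P * Q - of_nat (Suc q') * P * DQ * Q ^ Suc q'"
    using assms(1) by (simp add: algebra_simps)
  also have "\<dots> = 0" unfolding e by (simp add: algebra_simps)
  finally have "P ^ Suc p' = 0 \<or> of_nat (Suc p') * Q * DP - of_nat (Suc q') * P * DQ = 0"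
    by simp
  then show ?thesis
  proof
    assume "P ^ Suc p' = 0"
    then have "P = 0" "Q = 0" using assms(1) by (metis power_eq_0_iff zero_less_Suc)+
    then show ?thesis by simp
  qed
qed

definition agr :: "nat \<Rightarrow> 'b fps \<Rightarrow> 'b fps \<Rightarrow> bool" where
  "agr m A F \<longleftrightarrow> (\<forall>j<m. A $ j = F $ j)"

lemma agr_refl: "agr m A A" by (simp add: agr_def)

lemma agr_mult:
  fixes A B F G :: "'b::comm_ring_1 fps"
  assumes "agr m A F" "agr m B G" shows "agr m (A * B) (F * G)"
  unfolding agr_def fps_mult_nth
proof (intro allI impI sum.cong refl)
  fix j i assume "j < m" "i \<in> {0..j}"
  then show "A $ i * B $ (j - i) = F $ i * G $ (j - i)"
    using assms unfolding agr_def by auto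
qed

lemma agr_diff:
  fixes A B F G :: "'b::comm_ring_1 fps"
  assumes "agr m A F" "agr m B G" shows "agr m (A - B) (F - G)"
  using assms by (simp add: agr_def)

lemma agr_deriv:
  fixes A F :: "'b::comm_ring_1 fps"
  assumes "agr (Suc m) A F" shows "agr m (fps_deriv A) (fps_deriv F)"
  using assms by (simp add: agr_def)

lemma agr_Dxf:
  assumes "agr m A F" shows "agr m (Dxf A) (Dxf F)"
  using assms by (simp add: agr_def)

lemma agr_mono: "agr m A F \<Longrightarrow> k \<le> m \<Longrightarrow> agr k A F"
  by (simp add: agr_def)

lemma fps_of_poly_of_nat': "fps_of_poly (of_nat k) = of_nat k"
  by (simp add: of_nat_poly fps_of_poly_const fps_of_nat)

lemma fps_of_poly_dx: "fps_of_poly (dx_part A) = Dxf (fps_of_poly A)"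
  by (rule fps_ext) (simp add: dx_part_def coeff_map_poly rd_0)

lemma agr_trunc: "agr (Suc n) (fps_of_poly (trunc_y n P)) P"
  by (simp add: agr_def trunc_y_def)



definition bnd :: "nat \<Rightarrow> 'b::zero poly \<Rightarrow> bool" where
  "bnd m X \<longleftrightarrow> (\<forall>k\<ge>m. coeff X k = 0)"

lemma bnd_mult:
  fixes X Y :: "'b::comm_semiring_1 poly"
  assumes "bnd a X" "bnd b Y" shows "bnd (a + b - 1) (X * Y)"
  unfolding bnd_def coeff_mult
proof (intro allI impI sum.neutral ballI)
  fix k i assume k: "a + b - 1 \<le> k" and i: "i \<in> {..k}"
  show "coeff X i * coeff Y (k - i) = 0"
  proof (cases "i \<ge> a")
    case True then show ?thesis using assms by (simp add: bnd_def)
  next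
    case False
    then have "k - i \<ge> b" using k i by auto
    then show ?thesis using assms by (simp add: bnd_def)
  qed
qed

lemma bnd_mono: "bnd a X \<Longrightarrow> a \<le> b \<Longrightarrow> bnd b X"
  by (simp add: bnd_def)

lemma bnd_diff: "bnd a X \<Longrightarrow> bnd a Y \<Longrightarrow> bnd a (X - Y)"
  by (simp add: bnd_def)

lemma bnd_of_nat: "bnd 1 (of_nat k :: 'b::comm_semiring_1 poly)"
  by (simp add: bnd_def of_nat_poly coeff_pCons split: nat.split)

lemma bnd_trunc: "bnd (Suc n) (trunc_y n P)"
  by (simp add: bnd_def trunc_y_def)

lemma bnd_dx: "bnd m X \<Longrightarrow> bnd m (dx_part X)"
  by (simp add: bnd_def dx_part_def coeff_map_poly rd_0)

lemma bnd_pderiv: "bnd (Suc m) X \<Longrightarrow> bnd m (pderiv X)"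
  by (simp add: bnd_def coeff_pderiv)

lemma quot_facts:
  fixes X :: "'b::field poly"
  assumes "monom 1 n dvd X" "bnd (n + m) X"
  shows "bnd m (X div monom 1 n)" "coeff (X div monom 1 n) k = coeff X (n + k)"
proof -
  obtain R where R: "X = monom 1 n * R" using assms(1) by (auto simp: dvd_def)
  have d: "X div monom 1 n = R" unfolding R by (simp add: monom_eq_0_iff)
  show "coeff (X div monom 1 n) k = coeff X (n + k)" for k
    unfolding d R by (simp add: coeff_monom_mult)
  then show "bnd m (X div monom 1 n)" using assms(2) by (simp add: bnd_def)
qed

lemma deg_of_bnd: "bnd m X \<Longrightarrow> X \<noteq> 0 \<Longrightarrow> degree X < m"
  by (metis bnd_def leading_coeff_0_iff not_le)



theorem mainTheorem9:
  fixes P Q :: "'a::field poly fract fps" and p q n :: nat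
  assumes "p > 0" and "q > 0" and "coprime p q"
    and "P ^ p = Q ^ q"
  defines "Pn \<equiv> trunc_y n P" and "Qn \<equiv> trunc_y n Q"
  defines "\<alpha> \<equiv> of_nat p * Qn * dx_part Pn - of_nat q * Pn * dx_part Qn"
    and "\<beta> \<equiv> of_nat p * Qn * dy_part Pn - of_nat q * Pn * dy_part Qn"
  shows "monom 1 n dvd \<alpha> \<and> monom 1 n dvd \<beta> \<and>
         (let \<alpha>r = \<alpha> div monom 1 n; \<beta>r = \<beta> div monom 1 n in
            deg_y_form \<alpha>r \<beta>r \<le> int n \<and> vanishes_on_y0 \<alpha>r \<beta>r)"
proof -
  obtain p' q' where pq: "p = Suc p'" "q = Suc q'"
    using assms(1,2) by (metis gr0_implies_Suc)
  have Ex: "of_nat p * Q * Dxf P - of_nat q * P * Dxf Q = 0"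
    unfolding pq by (rule key_identity[where D = Dxf, OF _ Dxf_power Dxf_power]) (use assms(4) pq in simp)
  have Ey: "of_nat p * Q * fps_deriv P - of_nat q * P * fps_deriv Q = 0"
  proof -
    have d: "fps_deriv (F ^ Suc m) = of_nat (Suc m) * F ^ m * fps_deriv F" for F :: "'a poly fract fps" and m
      by (simp only: fps_deriv_power' diff_Suc_1 mult.assoc mult.commute[of "fps_deriv F"])
    show ?thesis unfolding pq by (rule key_identity[where D = fps_deriv, OF _ d d]) (use assms(4) pq in simp)
  qed
  have aP: "agr (Suc n) (fps_of_poly Pn) P" and aQ: "agr (Suc n) (fps_of_poly Qn) Q"
    by (simp_all add: Pn_def Qn_def agr_trunc)
  have fa: "fps_of_poly \<alpha> = of_nat p * fps_of_poly Qn * Dxf (fps_of_poly Pn)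
                - of_nat q * fps_of_poly Pn * Dxf (fps_of_poly Qn)"
    by (simp add: \<alpha>_def fps_of_poly_diff fps_of_poly_mult fps_of_poly_of_nat' fps_of_poly_dx)
  have fb: "fps_of_poly \<beta> = of_nat p * fps_of_poly Qn * fps_deriv (fps_of_poly Pn)
                - of_nat q * fps_of_poly Pn * fps_deriv (fps_of_poly Qn)"
    by (simp add: \<beta>_def dy_part_def fps_of_poly_diff fps_of_poly_mult fps_of_poly_of_nat' fps_of_poly_pderiv)
  have "agr (Suc n) (fps_of_poly \<alpha>) (of_nat p * Q * Dxf P - of_nat q * P * Dxf Q)"
    unfolding fa by (intro agr_diff agr_mult agr_refl agr_Dxf aP aQ)
  then have ca: "\<forall>k<Suc n. coeff \<alpha> k = 0" unfolding Ex by (simp add: agr_def)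
  have aP': "agr n (fps_of_poly Pn) P" and aQ': "agr n (fps_of_poly Qn) Q"
    using agr_mono[OF aP, of n] agr_mono[OF aQ, of n] by auto
  have "agr n (fps_of_poly \<beta>) (of_nat p * Q * fps_deriv P - of_nat q * P * fps_deriv Q)"
    unfolding fb by (intro agr_diff agr_mult agr_refl agr_deriv aP aQ aP' aQ')
  then have cb: "\<forall>k<n. coeff \<beta> k = 0" unfolding Ey by (simp add: agr_def)
  have da: "monom 1 n dvd \<alpha>" using ca by (simp add: monom_1_dvd_iff')
  have db: "monom 1 n dvd \<beta>" using cb by (simp add: monom_1_dvd_iff')
  have bP: "bnd (Suc n) Pn" and bQ: "bnd (Suc n) Qn" by (simp_all add: Pn_def Qn_def bnd_trunc)
  have "bnd (1 + Suc n - 1 + Suc n - 1) (of_nat p * Qn * dx_part Pn)"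
    by (intro bnd_mult bnd_of_nat bnd_dx bP bQ)
  moreover have "bnd (1 + Suc n - 1 + Suc n - 1) (of_nat q * Pn * dx_part Qn)"
    by (intro bnd_mult bnd_of_nat bnd_dx bP bQ)
  ultimately have ba: "bnd (n + Suc n) \<alpha>" unfolding \<alpha>_def by (auto intro: bnd_diff)
  have "bnd (1 + Suc n - 1 + n - 1) (of_nat p * Qn * dy_part Pn)"
    unfolding dy_part_def by (intro bnd_mult bnd_of_nat bnd_pderiv bP bQ)
  moreover have "bnd (1 + Suc n - 1 + n - 1) (of_nat q * Pn * dy_part Qn)"
    unfolding dy_part_def by (intro bnd_mult bnd_of_nat bnd_pderiv bP bQ)
  ultimately have "bnd (n + n) \<beta>" unfolding \<beta>_def by (auto intro: bnd_diff)
  then have bb: "bnd n (\<beta> div monom 1 n)" using quot_facts(1)[OF db] by blast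
  have ba': "bnd (Suc n) (\<alpha> div monom 1 n)" using quot_facts(1)[OF da ba] .
  have a0: "coeff (\<alpha> div monom 1 n) 0 = 0" using quot_facts(2)[OF da ba, of 0] ca by simp
  have "deg_y_form (\<alpha> div monom 1 n) (\<beta> div monom 1 n) \<le> int n"
    unfolding deg_y_form_def using deg_of_bnd[OF ba'] deg_of_bnd[OF bb] by auto
  moreover have "vanishes_on_y0 (\<alpha> div monom 1 n) (\<beta> div monom 1 n)"
    unfolding vanishes_on_y0_def using a0 by (simp add: poly_0_coeff_0)
  ultimately show ?thesis using da db by simp
qed


end
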